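(* Let $A,B,C$ be compact convex sets in the plane with no common point, and let $A'\subset A$, $B'\subset B$, $C'\subset C$ be compact convex sets that are pairwise intersecting. Then $o(A'B'C')=o(ABC)$.
   Context: For three pairwise intersecting compact convex sets $X,Y,Z$ in the plane: $o(XYZ)=0$ if $X\cap Y\cap Z\neq\emptyset$; otherwise $o(XYZ)=o(xyz)$ for any $x\in Y\cap Z$, $y\in X\cap Z$, $z\in X\cap Y$, where for points $o(xyz)=+1$ for a counterclockwise and $-1$ for a clockwise triangle (this is known to be independent of the choice of $x,y,z$). *)

theory Defs
  imports "HOL-Analysis.Analysis"
begin

text \<open>Orientation of a point triple:
  +1 counterclockwise, -1 clockwise (0 for collinear triples, which does not
  occur in the situations where the definition is used).\<close>
definition orient_pts :: "real \<times> real \<Rightarrow> real \<times> real \<Rightarrow> real \<times> real \<Rightarrow> int" where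
  "orient_pts x y z =
     (let d = (fst y - fst x) * (snd z - snd x) - (snd y - snd x) * (fst z - fst x)
      in if d > 0 then 1 else if d < 0 then -1 else 0)"

text \<open>Orientation of three (pairwise intersecting) sets: 0 if they have a common
  point, otherwise the orientation of x \<in> Y \<inter> Z, y \<in> X \<inter> Z, z \<in> X \<inter> Y
  (an arbitrary choice; the paper notes independence of the choice).\<close>
definition orient_sets :: "(real \<times> real) set \<Rightarrow> (real \<times> real) set \<Rightarrow> (real \<times> real) set \<Rightarrow> int" where
  "orient_sets X Y Z =
     (if X \<inter> Y \<inter> Z \<noteq> {} then 0
      else orient_pts (SOME x. x \<in> Y \<inter> Z) (SOME y. y \<in> X \<inter> Z) (SOME z. z \<in> X \<inter> Y))"

end

theory Submission
  imports Defs
begin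

definition DD :: "real \<times> real \<Rightarrow> real \<times> real \<Rightarrow> real \<times> real \<Rightarrow> real" where
  "DD x y z = (fst y - fst x) * (snd z - snd x) - (snd y - snd x) * (fst z - fst x)"

lemma orient_DD: "orient_pts x y z = (if DD x y z > 0 then 1 else if DD x y z < 0 then -1 else 0)"
  unfolding orient_pts_def DD_def Let_def by simp

lemma DD_cyc: "DD x y z = DD y z x"
  unfolding DD_def by (simp add: algebra_simps)

lemma DD_collinear:
  assumes "DD x y z = 0"
  shows "collinear {x, y, z}"
proof -
  have "collinear {y, x, z}"
  proof (cases "y = z")
    case True
    then show ?thesis by (simp add: collinear_3_expand)
  next
    case False
    show ?thesis
    proof (cases "fst y = fst z")
      case True
      with False have ne: "snd y \<noteq> snd z" by (simp add: prod_eq_iff)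
      define u where "u = (snd x - snd z) / (snd y - snd z)"
      have e: "(fst y - fst x) * (snd z - snd x) = (snd y - snd x) * (fst z - fst x)"
        using assms unfolding DD_def by simp
      have "(fst z - fst x) * (snd z - snd y) = 0"
        using e True by (simp add: algebra_simps)
      with ne have fx: "fst x = fst z" by simp
      have uu: "u * (snd y - snd z) = snd x - snd z"
        using ne unfolding u_def by simp
      have "snd x = u * snd y + (1 - u) * snd z"
        using uu by (simp add: algebra_simps)
      moreover have "fst x = u * fst y + (1 - u) * fst z"
        using fx True by (simp add: algebra_simps)
      ultimately have "x = u *\<^sub>R y + (1 - u) *\<^sub>R z"
        by (simp add: prod_eq_iff)
      then show ?thesis unfolding collinear_3_expand by blast
    next
      case ne: False
      define u where "u = (fst x - fst z) / (fst y - fst z)"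
      have e: "(fst y - fst x) * (snd z - snd x) = (snd y - snd x) * (fst z - fst x)"
        using assms unfolding DD_def by simp
      have "snd x = u * snd y + (1 - u) * snd z"
      proof -
        have "(fst y - fst z) * snd x = (fst x - fst z) * snd y + (fst y - fst x) * snd z"
          using e by (simp add: algebra_simps)
        moreover have uu: "u * (fst y - fst z) = fst x - fst z"
          using ne unfolding u_def by simp
        ultimately have "(fst y - fst z) * snd x = (fst y - fst z) * (u * snd y + (1 - u) * snd z)"
        proof -
          have "(fst y - fst z) * (u * snd y + (1 - u) * snd z)
              = (fst y - fst z) * snd z + (u * (fst y - fst z)) * (snd y - snd z)"
            by (simp add: algebra_simps)
          also have "\<dots> = (fst y - fst z) * snd z + (fst x - fst z) * (snd y - snd z)"
            by (simp only: uu)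
          also have "\<dots> = (fst y - fst z) * snd x"
            using calculation \<open>(fst y - fst z) * snd x = _\<close> by (simp add: algebra_simps)
          finally show ?thesis by (rule sym)
        qed
        then show ?thesis using ne by auto
      qed
      moreover have "fst x = u * fst y + (1 - u) * fst z"
      proof -
        have uu: "u * (fst y - fst z) = fst x - fst z"
          using ne unfolding u_def by simp
        then show ?thesis by (simp add: algebra_simps)
      qed
      ultimately have "x = u *\<^sub>R y + (1 - u) *\<^sub>R z"
        by (simp add: prod_eq_iff)
      then show ?thesis unfolding collinear_3_expand by blast
    qed
  qed
  moreover have "{y, x, z} = {x, y, z}" by auto
  ultimately show ?thesis by simp
qed

lemma DD_nz:
  assumes "convex A" "convex B" "convex C" "A \<inter> B \<inter> C = {}"
    and "x \<in> B \<inter> C" "y \<in> A \<inter> C" "z \<in> A \<inter> B"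
  shows "DD x y z \<noteq> 0"
proof
  assume "DD x y z = 0"
  then have "collinear {x, y, z}" by (rule DD_collinear)
  then have "between (y,z) x \<or> between (z,x) y \<or> between (x,y) z"
    by (simp add: collinear_between_cases)
  then show False
  proof (elim disjE)
    assume "between (y,z) x"
    then have "x \<in> A" using closed_segment_subset[of y A z] assms
      by (auto simp: between_mem_segment)
    then show False using assms by blast
  next
    assume "between (z,x) y"
    then have "y \<in> B" using closed_segment_subset[of z B x] assms
      by (auto simp: between_mem_segment)
    then show False using assms by blast
  next
    assume "between (x,y) z"
    then have "z \<in> C" using closed_segment_subset[of x C y] assms
      by (auto simp: between_mem_segment)
    then show False using assms by blast
  qed
qed

lemma DD_affine1:
  "DD ((1 - t) *\<^sub>R x + t *\<^sub>R x') y z = (1 - t) * DD x y z + t * DD x' y z"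
  unfolding DD_def by (simp add: algebra_simps)

lemma no_sign_change:
  assumes "convex A" "convex B" "convex C" "A \<inter> B \<inter> C = {}"
    and "x \<in> B \<inter> C" "x' \<in> B \<inter> C" "y \<in> A \<inter> C" "z \<in> A \<inter> B"
    and "DD x y z > 0" "DD x' y z < 0"
  shows False
proof -
  define a where "a = DD x y z"
  define b where "b = DD x' y z"
  define t where "t = a / (a - b)"
  have ab: "a > 0" "b < 0" using assms unfolding a_def b_def by auto
  have t01: "0 \<le> t" "t \<le> 1" using ab unfolding t_def by (auto simp: field_simps)
  have "(1 - t) *\<^sub>R x + t *\<^sub>R x' \<in> B \<inter> C"
    using t01 assms by (auto intro: convexD_alt)
  moreover have "DD ((1 - t) *\<^sub>R x + t *\<^sub>R x') y z = 0"
  proof -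
    have "(1 - t) * a + t * b = 0" using ab unfolding t_def by (simp add: field_simps)
    then show ?thesis unfolding DD_affine1 a_def b_def .
  qed
  ultimately show False using DD_nz[OF assms(1-4) _ assms(7,8)] by blast
qed

lemma sign_first:
  assumes "convex A" "convex B" "convex C" "A \<inter> B \<inter> C = {}"
    and "x \<in> B \<inter> C" "x' \<in> B \<inter> C" "y \<in> A \<inter> C" "z \<in> A \<inter> B"
  shows "orient_pts x y z = orient_pts x' y z"
proof -
  have n1: "DD x y z \<noteq> 0" using DD_nz[OF assms(1-5,7,8)] .
  have n2: "DD x' y z \<noteq> 0" using DD_nz[OF assms(1-4,6,7,8)] .
  have "\<not> (DD x y z > 0 \<and> DD x' y z < 0)"
    using no_sign_change[OF assms(1-4,5,6,7,8)] by blast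
  moreover have "\<not> (DD x' y z > 0 \<and> DD x y z < 0)"
    using no_sign_change[OF assms(1-4,6,5,7,8)] by blast
  ultimately show ?thesis using n1 n2 unfolding orient_DD by auto
qed

lemma orient_cyc: "orient_pts x y z = orient_pts y z x"
  unfolding orient_DD using DD_cyc[of x y z] by simp

lemma indep:
  assumes "convex A" "convex B" "convex C" "A \<inter> B \<inter> C = {}"
    and "x \<in> B \<inter> C" "x' \<in> B \<inter> C" "y \<in> A \<inter> C" "y' \<in> A \<inter> C"
    and "z \<in> A \<inter> B" "z' \<in> A \<inter> B"
  shows "orient_pts x y z = orient_pts x' y' z'"
proof -
  have "orient_pts x y z = orient_pts x' y z"
    using sign_first[OF assms(1-4), of x x' y z] assms by blast
  also have "\<dots> = orient_pts y z x'" by (rule orient_cyc)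
  also have "\<dots> = orient_pts y' z x'"
    using sign_first[of B C A y y' z x'] assms by (auto simp: Int_ac)
  also have "\<dots> = orient_pts z x' y'" by (rule orient_cyc)
  also have "\<dots> = orient_pts z' x' y'"
    using sign_first[of C A B z z' x' y'] assms by (auto simp: Int_ac)
  also have "\<dots> = orient_pts x' y' z'" using orient_cyc by metis
  finally show ?thesis .
qed

theorem corollary1:
  fixes A B C A' B' C' :: "(real \<times> real) set"
  assumes "compact A" "convex A" "compact B" "convex B" "compact C" "convex C"
    and "A \<inter> B \<inter> C = {}"
    and "A' \<subseteq> A" "B' \<subseteq> B" "C' \<subseteq> C"
    and "compact A'" "convex A'" "compact B'" "convex B'" "compact C'" "convex C'"
    and "A' \<inter> B' \<noteq> {}" "A' \<inter> C' \<noteq> {}" "B' \<inter> C' \<noteq> {}"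
  shows "orient_sets A' B' C' = orient_sets A B C"
proof -
  have e1: "A' \<inter> B' \<inter> C' = {}" using assms(7-10) by blast
  have x: "(SOME x. x \<in> B' \<inter> C') \<in> B' \<inter> C'" using assms(19) by (metis ex_in_conv someI_ex)
  have y: "(SOME x. x \<in> A' \<inter> C') \<in> A' \<inter> C'" using assms(18) by (metis ex_in_conv someI_ex)
  have z: "(SOME x. x \<in> A' \<inter> B') \<in> A' \<inter> B'" using assms(17) by (metis ex_in_conv someI_ex)
  have x2: "(SOME x. x \<in> B \<inter> C) \<in> B \<inter> C" using assms(9,10,19) by (metis ex_in_conv someI_ex Int_mono subset_empty)
  have y2: "(SOME x. x \<in> A \<inter> C) \<in> A \<inter> C" using assms(8,10,18) by (metis ex_in_conv someI_ex Int_mono subset_empty)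
  have z2: "(SOME x. x \<in> A \<inter> B) \<in> A \<inter> B" using assms(8,9,17) by (metis ex_in_conv someI_ex Int_mono subset_empty)
  show ?thesis
    unfolding orient_sets_def using e1 assms(7)
    apply simp
    apply (rule indep[OF assms(2,4,6,7)])
    using x y z x2 y2 z2 assms(8-10) by auto
qed

end
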